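(* Let $R$ be a commutative ring and $n\ge 1$. Then ${\rm E}_{\psi_n}(R)={\rm E}_{2n-1}(R)$.
   Context: All rings are commutative with identity. ${\rm E}_m(R)$ is the subgroup of ${\rm SL}_m(R)$ generated by the elementary matrices $E_{ij}(\lambda)=I_m+\lambda e_{ij}$, $i\ne j$, $\lambda\in R$, where $e_{ij}$ is the matrix unit. $\psi_n=\sum_{i=1}^n e_{2i-1,2i}-\sum_{i=1}^n e_{2i,2i-1}$ is the standard $2n\times 2n$ symplectic (alternating) matrix. Elements of $R^m$ are row vectors, ${}^t$ is transpose. For an invertible alternating $2n\times2n$ matrix $\varphi$ (alternating means of the form $\nu-\nu^t$), write $\varphi=\begin{pmatrix}0&-c\\ c^t&\nu\end{pmatrix}$, $\varphi^{-1}=\begin{pmatrix}0&d\\ -d^t&\mu\end{pmatrix}$ with $c,d\in R^{2n-1}$, and set $\alpha_\varphi(v)=I_{2n-1}+d^tv\nu$, $\beta_\varphi(v)=I_{2n-1}+\mu v^tc$ for $v\in R^{2n-1}$. ${\rm E}_\varphi(R)$ is the subgroup of ${\rm GL}_{2n-1}(R)$ generated by all $\alpha_\varphi(v),\beta_\varphi(v)$, $v\in R^{2n-1}$. *)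

theory Defs
  imports "Jordan_Normal_Form.Matrix"
begin

text \<open>Matrices are JNF matrices; indices are 0-based (paper index k corresponds to k-1).\<close>

inductive_set gen_subgroup :: "nat \<Rightarrow> 'a::comm_ring_1 mat set \<Rightarrow> 'a mat set"
  for m :: nat and S :: "'a mat set" where
  gen_one: "1\<^sub>m m \<in> gen_subgroup m S"
| gen_gen: "A \<in> S \<Longrightarrow> A \<in> gen_subgroup m S"
| gen_mult: "A \<in> gen_subgroup m S \<Longrightarrow> B \<in> gen_subgroup m S \<Longrightarrow> A * B \<in> gen_subgroup m S"
| gen_inv: "A \<in> gen_subgroup m S \<Longrightarrow> B \<in> carrier_mat m m \<Longrightarrow> A * B = 1\<^sub>m m
            \<Longrightarrow> B \<in> gen_subgroup m S"

definition mat_unit :: "nat \<Rightarrow> nat \<Rightarrow> nat \<Rightarrow> 'a::{zero,one} mat" where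
  "mat_unit m i j = mat m m (\<lambda>(k,l). if k = i \<and> l = j then 1 else 0)"

definition elem_mat :: "nat \<Rightarrow> nat \<Rightarrow> nat \<Rightarrow> 'a::comm_ring_1 \<Rightarrow> 'a mat" where
  "elem_mat m i j c = 1\<^sub>m m + c \<cdot>\<^sub>m mat_unit m i j"

definition E_mat :: "nat \<Rightarrow> 'a::comm_ring_1 mat set" where
  "E_mat m = gen_subgroup m {elem_mat m i j c | i j c. i < m \<and> j < m \<and> i \<noteq> j}"

definition psi :: "nat \<Rightarrow> 'a::comm_ring_1 mat" where
  "psi n = mat (2*n) (2*n) (\<lambda>(i,j). if even i \<and> j = i + 1 then 1
                                   else if odd i \<and> i = j + 1 then -1 else 0)"

definition mat_inv :: "'a::comm_ring_1 mat \<Rightarrow> 'a mat" where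
  "mat_inv A = (THE B. B \<in> carrier_mat (dim_row A) (dim_row A) \<and> A * B = 1\<^sub>m (dim_row A))"

definition col_of :: "'a vec \<Rightarrow> 'a mat" where
  "col_of v = mat (dim_vec v) 1 (\<lambda>(i,_). v $ i)"
definition row_of :: "'a vec \<Rightarrow> 'a mat" where
  "row_of v = mat 1 (dim_vec v) (\<lambda>(_,j). v $ j)"

text \<open>Block decomposition of a (2n x 2n) alternating phi:
  phi = [[0, -c],[c^t, nu]], phi^-1 = [[0, d],[-d^t, mu]].\<close>
definition phi_c :: "'a::comm_ring_1 mat \<Rightarrow> 'a vec" where
  "phi_c phi = vec (dim_row phi - 1) (\<lambda>j. - phi $$ (0, j+1))"
definition phi_nu :: "'a::comm_ring_1 mat \<Rightarrow> 'a mat" where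
  "phi_nu phi = mat (dim_row phi - 1) (dim_row phi - 1) (\<lambda>(i,j). phi $$ (i+1, j+1))"
definition phi_d :: "'a::comm_ring_1 mat \<Rightarrow> 'a vec" where
  "phi_d phi = vec (dim_row phi - 1) (\<lambda>j. mat_inv phi $$ (0, j+1))"
definition phi_mu :: "'a::comm_ring_1 mat \<Rightarrow> 'a mat" where
  "phi_mu phi = mat (dim_row phi - 1) (dim_row phi - 1) (\<lambda>(i,j). mat_inv phi $$ (i+1, j+1))"

definition alpha_phi :: "'a::comm_ring_1 mat \<Rightarrow> 'a vec \<Rightarrow> 'a mat" where
  "alpha_phi phi v = 1\<^sub>m (dim_row phi - 1) + col_of (phi_d phi) * row_of v * phi_nu phi"
definition beta_phi :: "'a::comm_ring_1 mat \<Rightarrow> 'a vec \<Rightarrow> 'a mat" where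
  "beta_phi phi v = 1\<^sub>m (dim_row phi - 1) + phi_mu phi * col_of v * row_of (phi_c phi)"

definition E_phi :: "'a::comm_ring_1 mat \<Rightarrow> 'a mat set" where
  "E_phi phi = gen_subgroup (dim_row phi - 1)
     ({alpha_phi phi v | v. v \<in> carrier_vec (dim_row phi - 1)}
      \<union> {beta_phi phi v | v. v \<in> carrier_vec (dim_row phi - 1)})"

end

theory Submission
  imports Defs
begin


definition D :: "nat \<Rightarrow> (nat \<Rightarrow> nat \<Rightarrow> 'a::comm_ring_1) \<Rightarrow> 'a mat" where
  "D m F = mat m m (\<lambda>(r,s). (if r = s then 1 else 0) + F r s)"

lemma D_mult: "D m F * D m G = D m (\<lambda>r s. F r s + G r s + (\<Sum>t<m. F r t * G t s))"
proof (rule eq_matI)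
  fix r s assume rs: "r < dim_row (D m (\<lambda>r s. F r s + G r s + (\<Sum>t<m. F r t * G t s)))" "s < dim_col (D m (\<lambda>r s. F r s + G r s + (\<Sum>t<m. F r t * G t s)))"
  hence rs': "r < m" "s < m" by (auto simp: D_def)
  have e: "((if r = t then 1 else 0) + F r t) * ((if t = s then 1 else 0) + G t s)
     = (if t = r then (if r = s then 1 else 0) else 0) + (if t = r then G r s else 0)
       + (if t = s then F r s else 0) + F r t * G t s" for t
    by (auto simp: algebra_simps)
  have "(D m F * D m G) $$ (r, s) = (\<Sum>t<m. ((if r = t then 1 else 0) + F r t) * ((if t = s then 1 else 0) + G t s))"
    using rs' by (simp add: D_def scalar_prod_def lessThan_atLeast0)
  also have "\<dots> = F r s + G r s + (\<Sum>t<m. F r t * G t s) + (if r = s then 1 else 0)"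
    unfolding e using rs' by (simp add: sum.distrib sum.delta)
  finally show "(D m F * D m G) $$ (r, s) = D m (\<lambda>r s. F r s + G r s + (\<Sum>t<m. F r t * G t s)) $$ (r, s)"
    using rs' by (simp add: D_def algebra_simps)
qed (auto simp: D_def)

lemma D_cong: "(\<And>r s. r < m \<Longrightarrow> s < m \<Longrightarrow> F r s = G r s) \<Longrightarrow> D m F = D m G"
  unfolding D_def by (rule eq_matI) auto

lemma ifmult: "(if P then a else 0) * (if Q then b else 0) = (if P \<and> Q then a * b else (0::'a::comm_ring_1))"
  by auto



definition pP :: "nat \<Rightarrow> nat" where "pP i = (if even i then i + 1 else i - 1)"
definition sS :: "nat \<Rightarrow> 'a::comm_ring_1" where "sS i = (if even i then 1 else -1)"

lemma psi_PS: "i < 2*n \<Longrightarrow> j < 2*n \<Longrightarrow> (psi n :: 'a::comm_ring_1 mat) $$ (i,j) = (if j = pP i then sS i else 0)"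
  unfolding psi_def pP_def sS_def by (auto elim: oddE)

lemma P_lt: "i < 2*n \<Longrightarrow> pP i < 2*n"
  unfolding pP_def by (auto elim!: evenE)

lemma pPpP: "pP (pP i) = i" unfolding pP_def by (auto elim!: oddE)
lemma sSP: "sS (pP i) = - (sS i :: 'a::comm_ring_1)" unfolding pP_def sS_def by (auto elim!: oddE)
lemma sSsS: "sS i * sS i = (1::'a::comm_ring_1)" unfolding sS_def by auto

lemma sum_delta_mult: "(\<Sum>t<(N::nat). (if t = a then x else 0) * g t) = (if a < N then x * g a else (0::'a::comm_ring_1))"
proof -
  have "(\<Sum>t<N. (if t = a then x else 0) * g t) = (\<Sum>t<N. if t = a then x * g a else 0)"
    by (rule sum.cong) auto
  thus ?thesis by (simp add: sum.delta)
qed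

lemma psi_carrier: "psi n \<in> carrier_mat (2*n) (2*n)" unfolding psi_def by (rule mat_carrier)
lemma dim_psi[simp]: "dim_row (psi n) = 2*n" "dim_col (psi n) = 2*n" unfolding psi_def by auto

lemma psi_sq: "(psi n :: 'a::comm_ring_1 mat) * psi n = - 1\<^sub>m (2*n)"
proof (rule eq_matI)
  fix r s assume "r < dim_row (- 1\<^sub>m (2*n) :: 'a mat)" "s < dim_col (- 1\<^sub>m (2*n) :: 'a mat)"
  hence rs: "r < 2*n" "s < 2*n" by auto
  have "(psi n * psi n :: 'a mat) $$ (r,s) = (\<Sum>t<2*n. (if t = pP r then sS r else 0) * psi n $$ (t, s))"
    using rs by (auto simp: scalar_prod_def lessThan_atLeast0 psi_PS intro!: sum.cong)
  also have "\<dots> = sS r * psi n $$ (pP r, s)" using P_lt[OF rs(1)] by (simp add: sum_delta_mult)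
  also have "\<dots> = (if s = r then -1 else 0)" using rs P_lt[OF rs(1)] by (simp add: psi_PS pPpP sSP sSsS)
  finally show "(psi n * psi n :: 'a mat) $$ (r,s) = (- 1\<^sub>m (2*n) :: 'a mat) $$ (r,s)" using rs by auto
qed auto

lemma mat_inv_psi: "mat_inv (psi n :: 'a::comm_ring_1 mat) = - psi n"
  unfolding mat_inv_def dim_psi
proof (rule the_equality)
  show "- psi n \<in> carrier_mat (2 * n) (2 * n) \<and> psi n * - psi n = (1\<^sub>m (2 * n) :: 'a mat)"
    using uminus_carrier_mat[OF psi_carrier[of n]] by (simp add: psi_sq)
next
  fix B :: "'a mat" assume B: "B \<in> carrier_mat (2 * n) (2 * n) \<and> psi n * B = 1\<^sub>m (2 * n)"
  have "- psi n = - psi n * (psi n * B)" using B right_mult_one_mat[OF uminus_carrier_mat[OF psi_carrier[of n]]] by simp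
  also have "\<dots> = (- psi n * psi n) * B" using B psi_carrier[of n]
    by (metis assoc_mult_mat uminus_carrier_iff_mat)
  also have "\<dots> = B" using B left_mult_one_mat[of B "2*n" "2*n"] by (simp add: psi_sq)
  finally show "B = - psi n" by simp
qed


lemma psi0: "0 < n \<Longrightarrow> j < 2*n \<Longrightarrow> (psi n :: 'a::comm_ring_1 mat) $$ (0, j) = (if j = 1 then 1 else 0)"
  unfolding psi_def by auto
lemma psi_k1_1: "k + 1 < 2*n \<Longrightarrow> (psi n :: 'a::comm_ring_1 mat) $$ (k+1, 1) = 0"
  unfolding psi_def by auto
lemma psi_1_k1: "k + 1 < 2*n \<Longrightarrow> (psi n :: 'a::comm_ring_1 mat) $$ (1, k+1) = 0"
  unfolding psi_def by auto

lemma alpha_D: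
  assumes n: "0 < n" and v: "v \<in> carrier_vec (2*n-1)"
  shows "alpha_phi (psi n :: 'a::comm_ring_1 mat) v
     = D (2*n-1) (\<lambda>r s. if r = 0 then - (\<Sum>k<2*n-1. v$k * psi n $$ (k+1, s+1)) else 0)"
proof (rule eq_matI)
  fix r s assume "r < dim_row (D (2*n-1) (\<lambda>r s. if r = 0 then - (\<Sum>k<2*n-1. v$k * psi n $$ (k+1, s+1)) else (0::'a)))"
     "s < dim_col (D (2*n-1) (\<lambda>r s. if r = 0 then - (\<Sum>k<2*n-1. v$k * psi n $$ (k+1, s+1)) else (0::'a)))"
  hence rs: "r < 2*n-1" "s < 2*n-1" by (auto simp: D_def)
  have d: "phi_d (psi n :: 'a mat) $ r = (if r = 0 then -1 else 0)"
    using rs n by (simp add: phi_d_def mat_inv_psi psi0)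
  have "(col_of (phi_d (psi n)) * row_of v * phi_nu (psi n :: 'a mat)) $$ (r,s)
     = (\<Sum>k<2*n-1. (phi_d (psi n) $ r * v $ k) * psi n $$ (k+1, s+1))"
    using rs v by (simp add: col_of_def row_of_def phi_d_def phi_nu_def scalar_prod_def lessThan_atLeast0)
  also have "\<dots> = (if r = 0 then - (\<Sum>k<2*n-1. v$k * psi n $$ (k+1, s+1)) else 0)"
    unfolding d by (simp add: sum_negf)
  finally show "alpha_phi (psi n) v $$ (r,s) = D (2*n-1) (\<lambda>r s. if r = 0 then - (\<Sum>k<2*n-1. v$k * psi n $$ (k+1, s+1)) else 0) $$ (r,s)"
    using rs v by (simp add: alpha_phi_def D_def col_of_def row_of_def phi_d_def phi_nu_def)
qed (use v in \<open>auto simp: alpha_phi_def D_def col_of_def row_of_def phi_d_def phi_nu_def\<close>)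

lemma dim_phi_c[simp]: "dim_vec (phi_c (psi n :: 'a::comm_ring_1 mat)) = 2*n-1"
  by (simp add: phi_c_def)

lemma beta_D:
  assumes n: "0 < n" and v: "v \<in> carrier_vec (2*n-1)"
  shows "beta_phi (psi n :: 'a::comm_ring_1 mat) v
     = D (2*n-1) (\<lambda>r s. if s = 0 then (\<Sum>k<2*n-1. psi n $$ (r+1, k+1) * v$k) else 0)"
proof (rule eq_matI)
  fix r s assume "r < dim_row (D (2*n-1) (\<lambda>r s. if s = 0 then (\<Sum>k<2*n-1. psi n $$ (r+1, k+1) * v$k) else (0::'a)))"
     "s < dim_col (D (2*n-1) (\<lambda>r s. if s = 0 then (\<Sum>k<2*n-1. psi n $$ (r+1, k+1) * v$k) else (0::'a)))"
  hence rs: "r < 2*n-1" "s < 2*n-1" by (auto simp: D_def)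
  have c: "phi_c (psi n :: 'a mat) $ s = (if s = 0 then -1 else 0)"
    using rs n by (simp add: phi_c_def psi0)
  have "(phi_mu (psi n) * col_of v * row_of (phi_c (psi n :: 'a mat))) $$ (r,s)
     = (\<Sum>k<2*n-1. - (psi n $$ (r+1, k+1) * v $ k)) * phi_c (psi n) $ s"
    using rs v by (simp add: col_of_def row_of_def phi_mu_def scalar_prod_def lessThan_atLeast0 mat_inv_psi sum_distrib_right)
  also have "\<dots> = (if s = 0 then (\<Sum>k<2*n-1. psi n $$ (r+1, k+1) * v$k) else 0)"
    unfolding c by (simp add: sum_negf)
  finally show "beta_phi (psi n) v $$ (r,s) = D (2*n-1) (\<lambda>r s. if s = 0 then (\<Sum>k<2*n-1. psi n $$ (r+1, k+1) * v$k) else 0) $$ (r,s)"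
    using rs v by (simp add: beta_phi_def D_def col_of_def row_of_def phi_c_def phi_mu_def)
qed (use v in \<open>auto simp: beta_phi_def D_def col_of_def row_of_def phi_c_def phi_mu_def\<close>)



lemma elem_D: "elem_mat m i j c = D m (\<lambda>r s. if r = i \<and> s = j then c else 0)"
  unfolding elem_mat_def D_def mat_unit_def by (rule eq_matI) auto

lemma D_zero: "D m (\<lambda>_ _. 0) = 1\<^sub>m m"
  unfolding D_def by (rule eq_matI) auto

lemma gen_mono: assumes "S \<subseteq> gen_subgroup m T" shows "gen_subgroup m S \<subseteq> gen_subgroup m T"
proof
  fix A assume "A \<in> gen_subgroup m S"
  thus "A \<in> gen_subgroup m T"
    by induction (use assms in \<open>auto intro: gen_subgroup.intros\<close>)
qed

lemma elem_in_E: "i < m \<Longrightarrow> j < m \<Longrightarrow> i \<noteq> j \<Longrightarrow> elem_mat m i j c \<in> E_mat m"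
  unfolding E_mat_def by (rule gen_gen) blast

lemma sum_if_zero: "(\<And>t. P t \<Longrightarrow> x t = 0) \<Longrightarrow> (\<Sum>t\<in>A. if P t then x t else 0) = (0::'a::comm_ring_1)"
  by (rule sum.neutral) auto

lemma row_in_E:
  fixes f :: "nat \<Rightarrow> 'a::comm_ring_1"
  assumes f0: "f 0 = 0"
  shows "D m (\<lambda>r s. if r = 0 then f s else 0) \<in> E_mat m"
proof -
  have K: "k \<le> m \<Longrightarrow> D m (\<lambda>r s. if r = 0 \<and> s < k then f s else 0) \<in> E_mat m" for k
  proof (induction k)
    case 0
    have "D m (\<lambda>r s. if r = 0 \<and> s < 0 then f s else 0) = D m (\<lambda>_ _. 0)" by (rule D_cong) auto
    then show ?case unfolding D_zero E_mat_def by (simp add: gen_one)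
  next
    case (Suc k)
    show ?case
    proof (cases "k = 0")
      case True
      have "D m (\<lambda>r s. if r = 0 \<and> s < Suc k then f s else 0) = D m (\<lambda>r s. if r = 0 \<and> s < k then f s else 0)"
        by (rule D_cong) (use True f0 in auto)
      then show ?thesis using Suc by simp
    next
      case False
      have z: "(if r = 0 \<and> t < k then f t else 0) * (if t = 0 \<and> s = k then f k else 0) = 0" for r s t
        using f0 by auto
      have P: "D m (\<lambda>r s. if r = 0 \<and> s < k then f s else 0) * elem_mat m 0 k (f k)
         = D m (\<lambda>r s. if r = 0 \<and> s < Suc k then f s else 0)"
        unfolding elem_D D_mult z sum.neutral_const by (rule D_cong) (use False in auto)
      have E1: "elem_mat m 0 k (f k) \<in> E_mat m" using False Suc.prems by (intro elem_in_E) auto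
      have E2: "D m (\<lambda>r s. if r = 0 \<and> s < k then f s else 0) \<in> E_mat m" using Suc.IH Suc.prems by simp
      show ?thesis unfolding P[symmetric] using E2 E1 unfolding E_mat_def by (rule gen_mult)
    qed
  qed
  have eq: "D m (\<lambda>r s. if r = 0 \<and> s < m then f s else 0) = D m (\<lambda>r s. if r = 0 then f s else 0)"
    by (rule D_cong) auto
  show ?thesis using K[of m] unfolding eq by simp
qed

lemma col_in_E:
  fixes f :: "nat \<Rightarrow> 'a::comm_ring_1"
  assumes f0: "f 0 = 0"
  shows "D m (\<lambda>r s. if s = 0 then f r else 0) \<in> E_mat m"
proof -
  have K: "k \<le> m \<Longrightarrow> D m (\<lambda>r s. if s = 0 \<and> r < k then f r else 0) \<in> E_mat m" for k
  proof (induction k)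
    case 0
    have "D m (\<lambda>r s. if s = 0 \<and> r < 0 then f r else 0) = D m (\<lambda>_ _. 0)" by (rule D_cong) auto
    then show ?case unfolding D_zero E_mat_def by (simp add: gen_one)
  next
    case (Suc k)
    show ?case
    proof (cases "k = 0")
      case True
      have "D m (\<lambda>r s. if s = 0 \<and> r < Suc k then f r else 0) = D m (\<lambda>r s. if s = 0 \<and> r < k then f r else 0)"
        by (rule D_cong) (use True f0 in auto)
      then show ?thesis using Suc by simp
    next
      case False
      have z: "(if t = 0 \<and> r < k then f r else 0) * (if t = k \<and> s = 0 then f k else 0) = 0" for r s t
        using False by auto
      have P: "D m (\<lambda>r s. if s = 0 \<and> r < k then f r else 0) * elem_mat m k 0 (f k)
         = D m (\<lambda>r s. if s = 0 \<and> r < Suc k then f r else 0)"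
        unfolding elem_D D_mult z sum.neutral_const by (rule D_cong) (use False in auto)
      have E1: "elem_mat m k 0 (f k) \<in> E_mat m" using False Suc.prems by (intro elem_in_E) auto
      have E2: "D m (\<lambda>r s. if s = 0 \<and> r < k then f r else 0) \<in> E_mat m" using Suc.IH Suc.prems by simp
      show ?thesis unfolding P[symmetric] using E2 E1 unfolding E_mat_def by (rule gen_mult)
    qed
  qed
  have eq: "D m (\<lambda>r s. if s = 0 \<and> r < m then f r else 0) = D m (\<lambda>r s. if s = 0 then f r else 0)"
    by (rule D_cong) auto
  show ?thesis using K[of m] unfolding eq by simp
qed

lemma commutator:
  fixes a :: "'a::comm_ring_1"
  assumes "i \<noteq> 0" "j \<noteq> 0" "i \<noteq> j" "i < m" "j < m"
  shows "elem_mat m i 0 a * elem_mat m 0 j 1 * elem_mat m i 0 (-a) * elem_mat m 0 j (-1) = elem_mat m i j a"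
proof -
  have 1: "elem_mat m i 0 a * elem_mat m 0 j 1 = D m (\<lambda>r s. (if r = i \<and> s = 0 then a else 0)
     + (if r = 0 \<and> s = j then 1 else 0) + (if r = i \<and> s = j then a else 0))"
    unfolding elem_D D_mult by (rule D_cong) (use assms in \<open>auto simp: ifmult sum.delta\<close>)
  have 2: "\<dots> * elem_mat m i 0 (-a) = D m (\<lambda>r s. (if r = 0 \<and> s = j then 1 else 0) + (if r = i \<and> s = j then a else 0))"
    unfolding elem_D D_mult by (rule D_cong) (use assms in \<open>auto simp: ifmult sum.delta sum.distrib distrib_right cong: conj_cong\<close>)
  have 3: "\<dots> * elem_mat m 0 j (-1) = elem_mat m i j a"
    unfolding elem_D D_mult by (rule D_cong) (use assms in \<open>auto simp: ifmult sum.delta sum.distrib distrib_right cong: conj_cong\<close>)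
  show ?thesis using 1 2 3 by simp
qed



lemma psi_S1: "Suc k < 2*n \<Longrightarrow> (psi n :: 'a::comm_ring_1 mat) $$ (Suc k, Suc 0) = 0"
  unfolding psi_def by auto
lemma psi_1S: "Suc k < 2*n \<Longrightarrow> (psi n :: 'a::comm_ring_1 mat) $$ (Suc 0, Suc k) = 0"
  unfolding psi_def by auto

lemma psi_B_entry:
  assumes "0 < i" "i < 2*n-1" "r < 2*n-1"
  shows "(psi n :: 'a::comm_ring_1 mat) $$ (r+1, (if odd i then i + 1 else i - 1)+1) = (if r = i then (if odd i then 1 else -1) else 0)"
proof (cases "odd i")
  case True
  have "(if odd i then i + 1 else i - 1)+1 < 2*n" using True assms by (auto elim!: oddE; presburger)
  then show ?thesis using True assms unfolding psi_def by auto
next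
  case False
  have "(if odd i then i + 1 else i - 1)+1 = i" using False assms by auto
  then show ?thesis using False assms unfolding psi_def by (auto; presburger)
qed
lemma psi_A_entry:
  assumes "0 < j" "j < 2*n-1" "s < 2*n-1"
  shows "(psi n :: 'a::comm_ring_1 mat) $$ ((if odd j then j + 1 else j - 1)+1, s+1) = (if s = j then (if odd j then -1 else 1) else 0)"
proof (cases "odd j")
  case True
  have "(if odd j then j + 1 else j - 1)+1 < 2*n" using True assms by (auto elim!: oddE; presburger)
  then show ?thesis using True assms unfolding psi_def by auto
next
  case False
  have "(if odd j then j + 1 else j - 1)+1 = j" using False assms by auto
  then show ?thesis using False assms unfolding psi_def by (auto; presburger)
qed

lemma alpha_in: "v \<in> carrier_vec (2*n-1) \<Longrightarrow> alpha_phi (psi n :: 'a::comm_ring_1 mat) v \<in> E_phi (psi n)"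
  unfolding E_phi_def dim_psi by (rule gen_gen) blast
lemma beta_in: "v \<in> carrier_vec (2*n-1) \<Longrightarrow> beta_phi (psi n :: 'a::comm_ring_1 mat) v \<in> E_phi (psi n)"
  unfolding E_phi_def dim_psi by (rule gen_gen) blast

lemma sum_vec_delta: "k < m \<Longrightarrow> (\<Sum>t<m. vec m (\<lambda>t. if t = k then a else 0) $ t * g t) = (a * g k :: 'a::comm_ring_1)"
proof -
  assume k: "k < m"
  have "(\<Sum>t<m. vec m (\<lambda>t. if t = k then a else 0) $ t * g t) = (\<Sum>t<m. if t = k then a * g k else 0)"
    by (rule sum.cong) auto
  thus ?thesis using k by (simp add: sum.delta)
qed

lemma sum_vec_delta': "k < m \<Longrightarrow> (\<Sum>t<m. g t * vec m (\<lambda>t. if t = k then a else 0) $ t) = (g k * a :: 'a::comm_ring_1)"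
  using sum_vec_delta[of k m a g] by (simp add: mult.commute)

lemma A_in:
  assumes n: "0 < n" and j: "0 < j" "j < 2*n-1"
  shows "elem_mat (2*n-1) 0 j c \<in> E_phi (psi n :: 'a::comm_ring_1 mat)"
proof -
  define k where "k = (if odd j then j + 1 else j - 1)"
  define a :: 'a where "a = (if odd j then c else - c)"
  have k: "k < 2*n-1" using j unfolding k_def by (auto elim!: oddE; presburger)
  define v where "v = vec (2*n-1) (\<lambda>t. if t = k then a else 0)"
  have v: "v \<in> carrier_vec (2*n-1)" unfolding v_def by simp
  have "alpha_phi (psi n :: 'a mat) v = elem_mat (2*n-1) 0 j c"
    unfolding alpha_D[OF n v] elem_D
  proof (rule D_cong)
    fix r s assume rs: "r < 2*n-1" "s < 2*n-1"
    have "(\<Sum>t<2*n-1. v$t * psi n $$ (t+1, s+1)) = a * (psi n :: 'a mat) $$ (k+1, s+1)"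
      unfolding v_def using k by (rule sum_vec_delta)
    also have "\<dots> = (if s = j then - c else 0)"
      using psi_A_entry[OF j rs(2), where 'a='a] unfolding a_def k_def by auto
    finally have X: "(\<Sum>t<2*n-1. v$t * psi n $$ (t+1, s+1)) = (if s = j then - c else (0::'a))" .
    show "(if r = 0 then - (\<Sum>t<2*n-1. v$t * psi n $$ (t+1, s+1)) else 0) = (if r = 0 \<and> s = j then c else (0::'a))"
      unfolding X by simp
  qed
  thus ?thesis using alpha_in[OF v] by simp
qed

lemma B_in:
  assumes n: "0 < n" and i: "0 < i" "i < 2*n-1"
  shows "elem_mat (2*n-1) i 0 c \<in> E_phi (psi n :: 'a::comm_ring_1 mat)"
proof -
  define k where "k = (if odd i then i + 1 else i - 1)"
  define a :: 'a where "a = (if odd i then c else - c)"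
  have k: "k < 2*n-1" using i unfolding k_def by (auto elim!: oddE; presburger)
  define v where "v = vec (2*n-1) (\<lambda>t. if t = k then a else 0)"
  have v: "v \<in> carrier_vec (2*n-1)" unfolding v_def by simp
  have "beta_phi (psi n :: 'a mat) v = elem_mat (2*n-1) i 0 c"
    unfolding beta_D[OF n v] elem_D
  proof (rule D_cong)
    fix r s assume rs: "r < 2*n-1" "s < 2*n-1"
    have "(\<Sum>t<2*n-1. psi n $$ (r+1, t+1) * v$t) = (psi n :: 'a mat) $$ (r+1, k+1) * a"
      unfolding v_def using k by (rule sum_vec_delta')
    also have "\<dots> = (if r = i then c else 0)"
      using psi_B_entry[OF i rs(1), where 'a='a] unfolding a_def k_def by auto
    finally have X: "(\<Sum>t<2*n-1. psi n $$ (r+1, t+1) * v$t) = (if r = i then c else (0::'a))" .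
    show "(if s = 0 then (\<Sum>t<2*n-1. psi n $$ (r+1, t+1) * v$t) else 0) = (if r = i \<and> s = 0 then c else (0::'a))"
      unfolding X by simp
  qed
  thus ?thesis using beta_in[OF v] by simp
qed

theorem lemma3p9:
  fixes n :: nat
  assumes "n \<ge> 1"
  shows "E_phi (psi n :: 'a::comm_ring_1 mat) = E_mat (2*n - 1)"
proof
  have n: "0 < n" using assms by simp
  show "E_phi (psi n :: 'a::comm_ring_1 mat) \<subseteq> E_mat (2*n - 1)"
    unfolding E_phi_def dim_psi E_mat_def[of "2*n-1"]
  proof (rule gen_mono, unfold E_mat_def[symmetric], safe)
    fix v :: "'a vec" assume v: "v \<in> carrier_vec (2*n-1)"
    show "alpha_phi (psi n) v \<in> E_mat (2*n-1)"
      unfolding alpha_D[OF n v] by (rule row_in_E) (use n in \<open>auto simp: psi_S1 intro!: sum.neutral\<close>)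
    show "beta_phi (psi n) v \<in> E_mat (2*n-1)"
      unfolding beta_D[OF n v] by (rule col_in_E) (use n in \<open>auto simp: psi_1S intro!: sum.neutral\<close>)
  qed
  have sub: "{elem_mat (2*n-1) i j c | i j c. i < 2*n-1 \<and> j < 2*n-1 \<and> i \<noteq> j} \<subseteq> E_phi (psi n :: 'a mat)"
  proof safe
    fix i j and c :: 'a assume ij: "i < 2*n-1" "j < 2*n-1" "i \<noteq> j"
    show "elem_mat (2*n-1) i j c \<in> E_phi (psi n)"
    proof (cases "i = 0")
      case True thus ?thesis using A_in[OF n, of j c] ij by simp
    next
      case i0: False
      show ?thesis
      proof (cases "j = 0")
        case True thus ?thesis using B_in[OF n, of i c] ij i0 by simp
      next
        case False
        have "elem_mat (2*n-1) i 0 c * elem_mat (2*n-1) 0 j 1 * elem_mat (2*n-1) i 0 (-c) * elem_mat (2*n-1) 0 j (-1)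
           \<in> E_phi (psi n :: 'a mat)"
          unfolding E_phi_def
          by (intro gen_mult; fold E_phi_def; (rule A_in B_in)?) (use n ij i0 False in auto)
        thus ?thesis using commutator[of i j "2*n-1" c] ij i0 False by simp
      qed
    qed
  qed
  have eq: "E_phi (psi n :: 'a mat) = gen_subgroup (2*n-1) ({alpha_phi (psi n) v |v. v \<in> carrier_vec (2*n-1)}
      \<union> {beta_phi (psi n) v |v. v \<in> carrier_vec (2*n-1)})" by (simp add: E_phi_def)
  show "E_mat (2*n - 1) \<subseteq> E_phi (psi n :: 'a::comm_ring_1 mat)"
    unfolding E_mat_def using gen_mono[OF sub[unfolded eq]] eq by simp
qed

end
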